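(* Let $T$ be an operator on a complex Hilbert space of dimension $n$ belonging to $\Upsilon_n$. Then the boundary $\partial W(T)$ of the numerical range of $T$ is a regular arc, and the function $\lambda(\theta)$ is differentiable for all $\theta\in[0,2\pi)$.
   Context: $\Upsilon_n$ is the class of all completely nonunitary contractions $T$ on an $n$-dimensional space (i.e. $\|T\|\le1$ and $T$ has no eigenvalue of modulus $1$) with $\operatorname{rank}(I-T^*T)=1$. $W(T)=\{\langle Tx,x\rangle:\|x\|=1\}$. For $\theta$ real, $\lambda(\theta)$ is the largest eigenvalue of the Hermitian matrix $\mathscr{R}e(e^{-i\theta}T)=\frac12(e^{-i\theta}T+e^{i\theta}T^* )$; it is the signed distance from the origin to the supporting line of $W(T)$ perpendicular to the ray of angle $\theta$. A regular arc of $\partial W(T)$ is one containing neither corner points nor straight line segments. *)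

theory Defs
  imports "HOL-Analysis.Analysis"
begin

text \<open>Operators on an n-dimensional complex Hilbert space are represented as
  complex n x n matrices acting on complex^'n (standard inner product).\<close>

definition cinner :: "complex^'n \<Rightarrow> complex^'n \<Rightarrow> complex" where
  "cinner x y = (\<Sum>i\<in>UNIV. x$i * cnj (y$i))"

definition adjoint_mat :: "complex^'n^'n \<Rightarrow> complex^'n^'n" where
  "adjoint_mat A = (\<chi> i j. cnj (A$j$i))"

definition is_eigenvalue :: "complex^'n^'n \<Rightarrow> complex \<Rightarrow> bool" where
  "is_eigenvalue A c \<longleftrightarrow> (\<exists>x. x \<noteq> 0 \<and> A *v x = c *s x)"

text \<open>The class Upsilon_n: completely nonunitary contractions with rank(I - T*T) = 1.\<close>
definition Upsilon :: "complex^'n^'n \<Rightarrow> bool" where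
  "Upsilon T \<longleftrightarrow> (\<forall>x. norm (T *v x) \<le> norm x)
      \<and> (\<forall>c. is_eigenvalue T c \<longrightarrow> cmod c \<noteq> 1)
      \<and> rank (mat 1 - adjoint_mat T ** T) = 1"

definition numerical_range :: "complex^'n^'n \<Rightarrow> complex set" where
  "numerical_range T = {cinner (T *v x) x | x. norm x = 1}"

definition re_part :: "real \<Rightarrow> complex^'n^'n \<Rightarrow> complex^'n^'n" where
  "re_part \<theta> T = (\<chi> i j. (exp (- \<i> * of_real \<theta>) * T$i$j + exp (\<i> * of_real \<theta>) * adjoint_mat T$i$j) / 2)"

definition lam :: "complex^'n^'n \<Rightarrow> real \<Rightarrow> real" where
  "lam T \<theta> = Max {\<mu>::real. is_eigenvalue (re_part \<theta> T) (of_real \<mu>)}"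

definition supports :: "complex set \<Rightarrow> complex \<Rightarrow> complex \<Rightarrow> bool" where
  "supports W p u \<longleftrightarrow> cmod u = 1 \<and> (\<forall>w\<in>W. Re (cnj u * w) \<le> Re (cnj u * p))"

definition corner_point :: "complex set \<Rightarrow> complex \<Rightarrow> bool" where
  "corner_point W p \<longleftrightarrow> p \<in> frontier W \<and>
     (\<exists>u1 u2. u1 \<noteq> u2 \<and> supports W p u1 \<and> supports W p u2)"

text \<open>The boundary is a regular arc: no corner points and no (nondegenerate) line segments.\<close>
definition regular_boundary :: "complex set \<Rightarrow> bool" where
  "regular_boundary W \<longleftrightarrow> \<not> (\<exists>p. corner_point W p) \<and>
     \<not> (\<exists>a b. a \<noteq> b \<and> closed_segment a b \<subseteq> frontier W)"

end

theory Submission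
  imports Defs
begin


lemma cinner_add_left: "cinner (x + y) z = cinner x z + cinner y z"
  by (simp add: cinner_def distrib_right sum.distrib)
lemma cinner_add_right: "cinner x (y + z) = cinner x y + cinner x z"
  by (simp add: cinner_def distrib_left sum.distrib)
lemma cinner_diff_left: "cinner (x - y) z = cinner x z - cinner y z"
  by (simp add: cinner_def left_diff_distrib sum_subtractf)
lemma cinner_diff_right: "cinner x (y - z) = cinner x y - cinner x z"
  by (simp add: cinner_def right_diff_distrib sum_subtractf)
lemma cinner_scale_left: "cinner (c *s x) y = c * cinner x y"
  by (simp add: cinner_def sum_distrib_left mult.assoc)
lemma cinner_scale_right: "cinner x (c *s y) = cnj c * cinner x y"
  by (simp add: cinner_def sum_distrib_left mult_ac)
lemma cinner_zero_left[simp]: "cinner 0 y = 0" by (simp add: cinner_def)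
lemma cinner_zero_right[simp]: "cinner x 0 = 0" by (simp add: cinner_def)
lemma cinner_cnj: "cnj (cinner x y) = cinner y x"
  by (simp add: cinner_def mult.commute)
lemma Re_cinner: "Re (cinner x y) = inner x y"
  by (simp add: cinner_def inner_vec_def inner_complex_def Re_sum)
lemma Im_cinner_self: "Im (cinner x x) = 0"
  by (simp add: cinner_def Im_sum)
lemma cinner_self: "cinner x x = complex_of_real ((norm x)^2)"
  by (simp add: complex_eq_iff Im_cinner_self Re_cinner power2_norm_eq_inner)
lemma cinner_adj: "cinner (A *v x) y = cinner x (adjoint_mat A *v y)"
proof -
  have "cinner (A *v x) y = (\<Sum>i\<in>UNIV. \<Sum>j\<in>UNIV. A$i$j * x$j * cnj (y$i))"
    by (simp add: cinner_def matrix_vector_mult_def sum_distrib_right)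
  also have "\<dots> = (\<Sum>j\<in>UNIV. \<Sum>i\<in>UNIV. A$i$j * x$j * cnj (y$i))"
    by (rule sum.swap)
  also have "\<dots> = cinner x (adjoint_mat A *v y)"
    by (simp add: cinner_def matrix_vector_mult_def adjoint_mat_def sum_distrib_left cnj_sum mult_ac)
  finally show ?thesis .
qed
lemma adjoint_adjoint[simp]: "adjoint_mat (adjoint_mat A) = A"
  by (simp add: adjoint_mat_def vec_eq_iff)
lemma cinner_adj2: "cinner x (A *v y) = cinner (adjoint_mat A *v x) y"
  by (metis cinner_adj adjoint_adjoint)
lemma mv_scale: "(A::complex^'n^'m) *v (c *s x) = c *s (A *v x)"
  by (simp add: vec_eq_iff matrix_vector_mult_def sum_distrib_left mult_ac)
lemma mv_add: "(A::complex^'n^'m) *v (x + y) = A *v x + A *v y"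
  by (simp add: matrix_vector_right_distrib)
lemma mv_diff: "(A::complex^'n^'m) *v (x - y) = A *v x - A *v y"
  by (simp add: matrix_vector_mult_diff_distrib)
lemma norm_smult: "norm (c *s (x::complex^'n)) = cmod c * norm x"
proof -
  have "norm (c *s x) ^2 = (cmod c * norm x)^2"
  proof -
    have "norm (c *s x) ^2 = Re (cinner (c *s x) (c *s x))"
      by (simp add: cinner_self)
    also have "\<dots> = Re (c * cnj c * cinner x x)"
      by (simp add: cinner_scale_left cinner_scale_right mult_ac)
    also have "\<dots> = (cmod c)^2 * (norm x)^2"
      by (simp add: cinner_self complex_mult_cnj cmod_power2 del: of_real_power)
    finally show ?thesis by (simp add: power_mult_distrib)
  qed
  then show ?thesis by (simp add: power2_eq_iff_nonneg)
qed
lemma ofreal_smult: "complex_of_real r *s x = r *\<^sub>R (x::complex^'n)"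
  unfolding vec_eq_iff proof
  fix i show "(complex_of_real r *s x) $ i = (r *\<^sub>R x) $ i"
    by (simp only: vector_smult_component vector_scaleR_component) (simp add: scaleR_conv_of_real)
qed



lemma cont_quad: "continuous_on UNIV (\<lambda>y::complex^'n. (M *v y) \<bullet> y)"
  unfolding matrix_vector_mult_def inner_vec_def
  by (intro continuous_intros)

lemma mv_scaleR: "(A::complex^'n^'m) *v (t *\<^sub>R x) = t *\<^sub>R (A *v x)"
  by (metis mv_scale ofreal_smult)

definition herm :: "complex^'n^'n \<Rightarrow> bool" where
  "herm M \<longleftrightarrow> (\<forall>x y. cinner (M *v x) y = cinner x (M *v y))"

lemma herm_sym: "herm M \<Longrightarrow> (M *v a) \<bullet> b = a \<bullet> (M *v b)"
  unfolding herm_def by (metis Re_cinner)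

lemma quad_scaleR: fixes M :: "complex^'n^'n" shows "(M *v (t *\<^sub>R y)) \<bullet> (t *\<^sub>R y) = t^2 * ((M *v y) \<bullet> y)"
  by (simp only: mv_scaleR inner_scaleR_left inner_scaleR_right) (simp add: power2_eq_square)

lemma cinner_axis: "cinner (axis i (1::complex) :: complex^'n) (axis i 1) = 1"
  by (simp add: cinner_def axis_def if_distrib cong: if_cong)

lemma norm_axis_c: "norm (axis i (1::complex) :: complex^'n) = 1"
proof -
  have "complex_of_real ((norm (axis i (1::complex) :: complex^'n))^2) = 1"
    using cinner_axis cinner_self by metis
  then have "(norm (axis i (1::complex) :: complex^'n))^2 = 1"
    by (metis of_real_eq_1_iff)
  then show ?thesis by (simp add: power2_eq_iff_nonneg)
qed

lemma V1:
  fixes M :: "complex^'n^'n"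
  shows "\<exists>y0 m. norm y0 = 1 \<and> (\<forall>y. (M *v y) \<bullet> y \<le> m * (norm y)^2) \<and> (M *v y0) \<bullet> y0 = m"
proof -
  have ne: "sphere (0::complex^'n) 1 \<noteq> {}"
  proof -
    have "norm (axis undefined (1::complex) :: complex^'n) = 1" by (simp add: norm_axis_c)
    then have "axis undefined (1::complex) \<in> sphere (0::complex^'n) 1" by simp
    then show ?thesis by blast
  qed
  obtain y0 where y0: "y0 \<in> sphere 0 1" and mx: "\<forall>y\<in>sphere 0 1. (M *v y) \<bullet> y \<le> (M *v y0) \<bullet> y0"
    using continuous_attains_sup[OF compact_sphere ne continuous_on_subset[OF cont_quad subset_UNIV]]
    by blast
  define m where "m = (M *v y0) \<bullet> y0"
  have "(M *v y) \<bullet> y \<le> m * (norm y)^2" for y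
  proof (cases "y = 0")
    case True then show ?thesis by simp
  next
    case False
    define z where "z = (1 / norm y) *\<^sub>R y"
    have "z \<in> sphere 0 1" using False by (simp add: z_def)
    then have "(M *v z) \<bullet> z \<le> m" using mx m_def by auto
    moreover have "(M *v y) \<bullet> y = (norm y)^2 * ((M *v z) \<bullet> z)"
    proof -
      have "y = norm y *\<^sub>R z" using False by (simp add: z_def)
      then show ?thesis by (metis quad_scaleR)
    qed
    ultimately show ?thesis
      by (metis mult.commute mult_left_mono zero_le_power2)
  qed
  then show ?thesis using y0 m_def by auto
qed

lemma V2:
  fixes M :: "complex^'n^'n"
  assumes h: "herm M" and le: "\<forall>y. (M *v y) \<bullet> y \<le> m * (norm y)^2"
    and eq: "(M *v y0) \<bullet> y0 = m * (norm y0)^2"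
  shows "M *v y0 = complex_of_real m *s y0"
proof -
  define r where "r = M *v y0 - m *\<^sub>R y0"
  define F where "F y = m * (norm y)^2 - (M *v y) \<bullet> y" for y
  have F0: "F y \<ge> 0" for y using le by (simp add: F_def)
  have Fy0: "F y0 = 0" using eq by (simp add: F_def)
  have exp: "F (y0 + t *\<^sub>R r) = F y0 - 2 * t * (r \<bullet> r) + t^2 * F r" for t
  proof -
    have s: "(M *v r) \<bullet> y0 = (M *v y0) \<bullet> r"
      using herm_sym[OF h, of r y0] by (simp add: inner_commute)
    have "F (y0 + t *\<^sub>R r) = m * ((y0 + t *\<^sub>R r) \<bullet> (y0 + t *\<^sub>R r))
        - (M *v y0 + t *\<^sub>R (M *v r)) \<bullet> (y0 + t *\<^sub>R r)"
      by (simp add: F_def mv_add mv_scaleR power2_norm_eq_inner)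
    also have "\<dots> = m * (y0 \<bullet> y0) + 2 * t * m * (y0 \<bullet> r) + t^2 * m * (r \<bullet> r)
        - ((M *v y0) \<bullet> y0 + 2 * t * ((M *v y0) \<bullet> r) + t^2 * ((M *v r) \<bullet> r))"
      by (simp add: inner_add_left inner_add_right s inner_commute[of y0 r] algebra_simps power2_eq_square)
    also have "\<dots> = F y0 - 2 * t * (r \<bullet> r) + t^2 * F r"
    proof -
      have hr: "(M *v y0) \<bullet> r - m * (y0 \<bullet> r) = r \<bullet> r"
        by (simp add: r_def inner_diff_left)
      show ?thesis unfolding F_def power2_norm_eq_inner using hr
        by (simp add: algebra_simps)
    qed
    finally show ?thesis .
  qed
  have rr: "r \<bullet> r = 0"
  proof (rule ccontr)
    assume "r \<bullet> r \<noteq> 0"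
    then have p: "r \<bullet> r > 0" by (metis inner_gt_zero_iff inner_zero_left)
    define t where "t = (r \<bullet> r) / (F r + 1)"
    have Fr: "F r \<ge> 0" by (rule F0)
    have tp: "t > 0" using p Fr by (simp add: t_def)
    have "0 \<le> F (y0 + t *\<^sub>R r)" by (rule F0)
    also have "\<dots> = t * (t * F r - 2 * (r \<bullet> r))"
      by (simp add: exp Fy0 algebra_simps power2_eq_square)
    finally have "0 \<le> t * F r - 2 * (r \<bullet> r)"
      using tp by (simp add: zero_le_mult_iff)
    moreover have "t * F r \<le> r \<bullet> r"
    proof -
      have "t * F r = (r \<bullet> r) * (F r / (F r + 1))" by (simp add: t_def)
      also have "\<dots> \<le> (r \<bullet> r) * 1"
        using p Fr by (intro mult_left_mono) auto
      finally show ?thesis by simp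
    qed
    ultimately show False using p by linarith
  qed
  then have "r = 0" by simp
  then show ?thesis by (simp add: r_def ofreal_smult)
qed



definition G :: "complex^'n^'n \<Rightarrow> complex \<Rightarrow> complex^'n^'n" where
  "G T u = (\<chi> i j. (cnj u * T$i$j + u * adjoint_mat T$i$j) / 2)"

lemma G_mv: "G T u *v x = (1/2) *s (cnj u *s (T *v x) + u *s (adjoint_mat T *v x))"
  unfolding vec_eq_iff
proof
  fix i
  show "(G T u *v x) $ i = ((1/2) *s (cnj u *s (T *v x) + u *s (adjoint_mat T *v x))) $ i"
  proof -
    have "((1/2) *s (cnj u *s (T *v x) + u *s (adjoint_mat T *v x))) $ i
       = (1/2)*(cnj u*(\<Sum>j\<in>UNIV. T$i$j*x$j) + u*(\<Sum>j\<in>UNIV. adjoint_mat T$i$j*x$j))"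
      by (simp add: matrix_vector_mult_def)
    also have "\<dots> = (\<Sum>j\<in>UNIV. (1/2)*(cnj u*(T$i$j*x$j) + u*(adjoint_mat T$i$j*x$j)))"
      by (simp add: sum_distrib_left sum.distrib distrib_left)
    also have "\<dots> = (G T u *v x) $ i"
      unfolding G_def matrix_vector_mult_def by (auto intro!: sum.cong simp: field_simps)
    finally show ?thesis by simp
  qed
qed

lemma G_adj: "adjoint_mat (G T u) = G T u"
  by (simp add: vec_eq_iff G_def adjoint_mat_def add.commute)

lemma G_herm: "herm (G T u)"
  unfolding herm_def by (metis cinner_adj G_adj)

lemma G_quad: "(G T u *v y) \<bullet> y = Re (cnj u * cinner (T *v y) y)"
proof -
  have a: "cinner (adjoint_mat T *v y) y = cnj (cinner (T *v y) y)"
    by (metis cinner_adj2 cinner_cnj)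
  have "(G T u *v y) \<bullet> y = Re (cinner (G T u *v y) y)" by (simp add: Re_cinner)
  also have "\<dots> = Re ((1/2) * (cnj u * cinner (T *v y) y + u * cnj (cinner (T *v y) y)))"
    by (simp add: G_mv cinner_scale_left cinner_add_left a)
  also have "\<dots> = Re (cnj u * cinner (T *v y) y)"
    by simp
  finally show ?thesis .
qed

lemma re_part_G: "re_part \<theta> T = G T (exp (\<i> * of_real \<theta>))"
proof -
  have "cnj (exp (\<i> * complex_of_real \<theta>)) = exp (- \<i> * of_real \<theta>)"
    by (simp add: exp_cnj)
  then show ?thesis by (simp add: re_part_def G_def)
qed

lemma eig_orth:
  assumes h: "herm M" and a: "M *v a = \<mu> *\<^sub>R a" and b: "M *v b = \<nu> *\<^sub>R b" and ne: "\<mu> \<noteq> \<nu>"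
  shows "a \<bullet> b = 0"
proof -
  have "(M *v a) \<bullet> b = a \<bullet> (M *v b)" by (rule herm_sym[OF h])
  then have "\<mu> * (a \<bullet> b) = \<nu> * (a \<bullet> b)" using a b by simp
  then show ?thesis using ne by simp
qed

lemma eig_finite:
  fixes M :: "complex^'n^'n"
  assumes h: "herm M"
  shows "finite {\<mu>::real. is_eigenvalue M (of_real \<mu>)}"
proof -
  let ?E = "{\<mu>::real. is_eigenvalue M (of_real \<mu>)}"
  define v where "v \<mu> = (SOME x. x \<noteq> 0 \<and> M *v x = \<mu> *\<^sub>R x)" for \<mu>
  have v: "v \<mu> \<noteq> 0 \<and> M *v v \<mu> = \<mu> *\<^sub>R v \<mu>" if "\<mu> \<in> ?E" for \<mu>
  proof -
    from that have "\<exists>x. x \<noteq> 0 \<and> M *v x = \<mu> *\<^sub>R x"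
      by (simp add: is_eigenvalue_def ofreal_smult)
    then show ?thesis unfolding v_def by (rule someI_ex)
  qed
  have inj: "inj_on v ?E"
  proof (rule inj_onI)
    fix a b assume ab: "a \<in> ?E" "b \<in> ?E" "v a = v b"
    then have "a *\<^sub>R v a = b *\<^sub>R v a" using v by metis
    then show "a = b" using v[OF ab(1)] by (simp add: scaleR_cancel_right)
  qed
  have "pairwise orthogonal (v ` ?E)"
  proof -
    have "v a \<bullet> v b = 0" if ab: "a \<in> ?E" "b \<in> ?E" "v a \<noteq> v b" for a b
    proof -
      from ab have "a \<noteq> b" by auto
      then show ?thesis using eig_orth[OF h] v[OF ab(1)] v[OF ab(2)] by blast
    qed
    then show ?thesis unfolding pairwise_def orthogonal_def by blast
  qed
  then have "finite (v ` ?E)" by (rule pairwise_orthogonal_imp_finite)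
  then show ?thesis using inj finite_imageD by blast
qed

lemma top_eig:
  fixes M :: "complex^'n^'n"
  assumes h: "herm M"
  shows "\<exists>y0 m. norm y0 = 1 \<and> (\<forall>y. (M *v y) \<bullet> y \<le> m * (norm y)^2) \<and> M *v y0 = m *\<^sub>R y0
     \<and> Max {\<mu>::real. is_eigenvalue M (of_real \<mu>)} = m"
proof -
  obtain y0 m where y0: "norm y0 = 1" and le: "\<forall>y. (M *v y) \<bullet> y \<le> m * (norm y)^2"
    and eq: "(M *v y0) \<bullet> y0 = m" using V1 by blast
  have ev: "M *v y0 = m *\<^sub>R y0"
    using V2[OF h le, of y0] eq y0 by (simp add: ofreal_smult)
  have "Max {\<mu>::real. is_eigenvalue M (of_real \<mu>)} = m"
  proof (rule Max_eqI)
    show "finite {\<mu>::real. is_eigenvalue M (of_real \<mu>)}" by (rule eig_finite[OF h])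
    show "m \<in> {\<mu>::real. is_eigenvalue M (of_real \<mu>)}"
      using ev y0 by (auto simp: is_eigenvalue_def ofreal_smult intro!: exI[of _ y0])
  next
    fix \<mu> assume "\<mu> \<in> {\<mu>::real. is_eigenvalue M (of_real \<mu>)}"
    then obtain x where x: "x \<noteq> 0" "M *v x = \<mu> *\<^sub>R x"
      by (auto simp: is_eigenvalue_def ofreal_smult)
    have "\<mu> * (norm x)^2 = (M *v x) \<bullet> x" using x by (simp add: power2_norm_eq_inner)
    also have "\<dots> \<le> m * (norm x)^2" using le by blast
    finally show "\<mu> \<le> m" using x by simp
  qed
  then show ?thesis using y0 le ev by blast
qed



lemma rank1_decomp:
  fixes D :: "complex^'n^'n"
  assumes "rank D = 1"
  shows "\<exists>r c. \<forall>i j. D$i$j = c$i * r$j"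
proof -
  obtain B where B: "B \<subseteq> rows D" "vec.independent B" "rows D \<subseteq> vec.span B" "card B = vec.dim (rows D)"
    by (rule vec.basis_exists)
  then have "card B = 1" using assms by (simp add: row_rank_def_gen)
  then obtain r where Br: "B = {r}" by (meson card_1_singletonE)
  have "\<exists>k. row i D = k *s r" for i
  proof -
    have "row i D \<in> rows D" by (auto simp: rows_def)
    then have "row i D \<in> vec.span {r}" using B Br by auto
    then show ?thesis by (auto simp: vec.span_singleton)
  qed
  then obtain c where c: "\<And>i. row i D = c i *s r" by metis
  have "D$i$j = (\<chi> i. c i)$i * r$j" for i j
  proof -
    have "D$i$j = (row i D)$j" by (simp add: row_def)
    also have "\<dots> = c i * r$j" by (simp add: c)
    finally show ?thesis by simp
  qed
  then show ?thesis by blast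
qed

lemma cmod_cinner_le: "cmod (cinner x y) \<le> norm x * norm y"
proof -
  define s where "s = (if cinner x y = 0 then 1 else cinner x y / cmod (cinner x y))"
  have s1: "cmod s = 1" by (simp add: s_def norm_divide)
  have "cmod (cinner x y) = Re (cnj s * cinner x y)"
  proof (cases "cinner x y = 0")
    case False
    then show ?thesis by (simp add: s_def complex_mult_cnj cmod_power2 power2_eq_square[symmetric]
        divide_simps) 
  qed (simp add: s_def)
  also have "\<dots> = (cnj s *s x) \<bullet> y" by (simp add: Re_cinner[symmetric] cinner_scale_left)
  also have "\<dots> \<le> norm (cnj s *s x) * norm y" by (rule norm_cauchy_schwarz)
  also have "\<dots> = norm x * norm y" by (simp add: norm_smult s1)
  finally show ?thesis .
qed

lemma contraction_eig:
  fixes T :: "complex^'n^'n"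
  assumes contr: "\<forall>x. norm (T *v x) \<le> norm x"
    and ev: "adjoint_mat T *v v = \<mu> *s v" and mu: "cmod \<mu> = 1"
  shows "T *v v = cnj \<mu> *s v"
proof -
  have c: "cinner (T *v v) (cnj \<mu> *s v) = of_real ((norm v)^2)"
  proof -
    have "cinner (T *v v) (cnj \<mu> *s v) = \<mu> * cinner v (adjoint_mat T *v v)"
      by (simp add: cinner_scale_right cinner_adj)
    also have "\<dots> = \<mu> * cnj \<mu> * cinner v v" by (simp add: ev cinner_scale_right)
    also have "\<dots> = of_real ((norm v)^2)"
      using mu by (simp add: complex_mult_cnj cinner_self cmod_power2[symmetric])
    finally show ?thesis .
  qed
  have "(norm (T *v v - cnj \<mu> *s v))^2 = (norm (T *v v))^2 - 2 * ((T *v v) \<bullet> (cnj \<mu> *s v))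
      + (norm (cnj \<mu> *s v))^2"
    by (simp add: power2_norm_eq_inner inner_diff_left inner_diff_right inner_commute)
  also have "\<dots> = (norm (T *v v))^2 - (norm v)^2"
    using c mu by (simp add: Re_cinner[symmetric] norm_smult)
  also have "\<dots> \<le> 0" using contr by (simp add: norm_ge_zero power_mono)
  finally have "norm (T *v v - cnj \<mu> *s v) = 0" by simp
  then show ?thesis by simp
qed



lemma lemmaA:
  fixes T :: "complex^'n^'n"
  assumes Ups: "Upsilon T" and u: "cmod u = 1"
    and ev: "G T u *v z = m *\<^sub>R z" and D0: "adjoint_mat T *v (T *v z) = z"
  shows "z = 0"
proof (rule ccontr)
  assume z: "z \<noteq> 0"
  have contr: "\<forall>x. norm (T *v x) \<le> norm x" and noev: "\<And>c. is_eigenvalue T c \<Longrightarrow> cmod c \<noteq> 1"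
    using Ups by (auto simp: Upsilon_def)
  let ?A = "adjoint_mat T"
  have uu: "cnj u * u = 1" using u by (metis complex_norm_square mult.commute of_real_1 power_one)
  have "\<bar>m\<bar> * (norm z)^2 \<le> (norm z)^2"
  proof -
    have "m * (norm z)^2 = (G T u *v z) \<bullet> z" using ev by (simp add: power2_norm_eq_inner)
    also have "\<dots> = (cnj u *s (T *v z)) \<bullet> z" by (simp only: G_quad) (simp add: Re_cinner[symmetric] cinner_scale_left)
    finally have mz: "m * (norm z)^2 = (cnj u *s (T *v z)) \<bullet> z" .
    have "\<bar>(cnj u *s (T *v z)) \<bullet> z\<bar> \<le> norm (cnj u *s (T *v z)) * norm z"
      by (rule Cauchy_Schwarz_ineq2)
    also have "\<dots> \<le> norm z * norm z" using contr u by (simp add: norm_smult mult_right_mono)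
    finally show ?thesis using mz by (simp add: abs_mult power2_eq_square)
  qed
  then have m1: "\<bar>m\<bar> \<le> 1" using z by simp
  define w where "w = cnj u *s (T *v z)"
  have Az: "?A *v z = cnj u *s (of_real (2 * m) *s z) - cnj u *s w"
  proof -
    have e1: "(1/2) *s (w + u *s (?A *v z)) = of_real m *s z" using ev by (simp add: G_mv w_def ofreal_smult)
    have "\<And>i. (?A *v z)$i = cnj u * (of_real (2 * m) * z$i) - cnj u * w$i"
    proof -
      fix i
      have "((1/2) *s (w + u *s (?A *v z)))$i = (of_real m *s z)$i" using e1 by simp
      then have "w$i / 2 + u * (?A *v z)$i / 2 = of_real m * z$i" by simp
      then have "u * (?A *v z)$i = 2 * of_real m * z$i - w$i" by (simp add: field_simps)
      then have "cnj u * u * (?A *v z)$i = cnj u * (2 * of_real m * z$i - w$i)" by (simp add: mult.assoc)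
      then have "(?A *v z)$i = cnj u * (2 * of_real m * z$i - w$i)" using uu by simp
      then show "(?A *v z)$i = cnj u * (of_real (2 * m) * z$i) - cnj u * w$i" by (simp add: algebra_simps)
    qed
    then show ?thesis by (simp add: vec_eq_iff)
  qed
  have Aw: "?A *v w = cnj u *s z" by (simp add: w_def mv_scale D0)
  define s where "s = sqrt (1 - m^2)"
  have "m^2 \<le> 1" using m1 by (simp add: abs_square_le_1)
  then have s2: "s^2 = 1 - m^2" by (simp add: s_def)
  define t where "t = Complex m s"
  have tq: "t * t - 2 * m * t + 1 = 0"
    using s2 by (simp add: t_def complex_eq_iff power2_eq_square algebra_simps)
  have t1: "cmod t = 1" using s2 by (simp add: t_def cmod_def)
  define v where "v = w - t *s z"
  have Av: "?A *v v = (cnj u * t) *s v"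
  proof -
    have "?A *v v = cnj u *s z - t *s (cnj u *s (of_real (2 * m) *s z) - cnj u *s w)"
      by (simp add: v_def mv_diff mv_scale Aw Az)
    also have "\<dots> = (cnj u * t) *s v"
    proof (subst vec_eq_iff, rule allI)
      fix i
      have hh: "cnj u * z$i - t * (cnj u * (of_real (2*m) * z$i) - cnj u * w$i) - cnj u * t * (w$i - t * z$i)
            = cnj u * z$i * (t * t - 2 * m * t + 1)" by (simp add: algebra_simps)
      have "(cnj u *s z - t *s (cnj u *s (of_real (2 * m) *s z) - cnj u *s w))$i
          = cnj u * z$i - t * (cnj u * (of_real (2*m) * z$i) - cnj u * w$i)" by (simp add: algebra_simps)
      also have "\<dots> = cnj u * t * (w$i - t * z$i)" by (metis hh tq mult_zero_right eq_iff_diff_eq_0)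
      also have "\<dots> = ((cnj u * t) *s v)$i" by (simp add: v_def algebra_simps)
      finally show "(cnj u *s z - t *s (cnj u *s (of_real (2 * m) *s z) - cnj u *s w))$i = ((cnj u * t) *s v)$i" .
    qed
    finally show ?thesis .
  qed
  show False
  proof (cases "v = 0")
    case True
    then have "w = t *s z" by (simp add: v_def)
    then have "u *s w = (u * t) *s z" by (simp add: vector_smult_assoc)
    moreover have "u *s w = T *v z" using uu by (simp add: w_def vector_smult_assoc mult.commute)
    ultimately have "is_eigenvalue T (u * t)" using z by (auto simp: is_eigenvalue_def)
    then show False using noev[of "u * t"] u t1 by (simp add: norm_mult)
  next
    case False
    have "T *v v = cnj (cnj u * t) *s v"
      by (rule contraction_eig[OF contr Av]) (simp add: norm_mult u t1)
    then have "is_eigenvalue T (cnj (cnj u * t))" using False by (auto simp: is_eigenvalue_def)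
    then show False using noev[of "cnj (cnj u * t)"] u t1 by (simp add: norm_mult)
  qed
qed



lemma ell_exists:
  fixes T :: "complex^'n^'n"
  assumes "Upsilon T"
  shows "\<exists>r c. \<forall>z. z - adjoint_mat T *v (T *v z) = (\<Sum>j\<in>UNIV. r$j * z$j) *s c"
proof -
  let ?D = "mat 1 - adjoint_mat T ** T"
  have "rank ?D = 1" using assms by (simp add: Upsilon_def)
  then obtain r c where rc: "\<forall>i j. ?D$i$j = c$i * r$j" using rank1_decomp by blast
  have "z - adjoint_mat T *v (T *v z) = (\<Sum>j\<in>UNIV. r$j * z$j) *s c" for z
  proof -
    have "z - adjoint_mat T *v (T *v z) = ?D *v z"
      by (simp add: matrix_vector_mult_diff_rdistrib matrix_vector_mul_assoc)
    also have "\<dots> = (\<Sum>j\<in>UNIV. r$j * z$j) *s c"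
      by (simp only: vec_eq_iff matrix_vector_mult_def rc[rule_format] vector_smult_component vec_lambda_beta)
        (simp add: sum_distrib_left mult_ac)
    finally show ?thesis .
  qed
  then show ?thesis by blast
qed

lemma G_lin: "G T u *v (a *s x - b *s y) = a *s (G T u *v x) - b *s (G T u *v y)"
  by (simp add: mv_diff mv_scale)

lemma onedim:
  fixes T :: "complex^'n^'n"
  assumes Ups: "Upsilon T" and u: "cmod u = 1"
    and ex: "G T u *v x = m *\<^sub>R x" and ey: "G T u *v y = m *\<^sub>R y" and x0: "x \<noteq> 0"
  shows "\<exists>k. y = k *s x"
proof -
  obtain r c where rc: "\<forall>z. z - adjoint_mat T *v (T *v z) = (\<Sum>j\<in>UNIV. r$j * z$j) *s c"
    using ell_exists[OF Ups] by blast
  define L where "L z = (\<Sum>j\<in>UNIV. r$j * z$j)" for z :: "complex^'n"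
  have D: "adjoint_mat T *v (T *v z) = z" if "L z = 0" for z
    using rc[rule_format, of z] that by (simp add: L_def)
  have lin: "L (a *s x - b *s y) = a * L x - b * L y" for a b x y
    by (simp add: L_def sum_distrib_left sum_subtractf algebra_simps)
  have lx: "L x \<noteq> 0"
  proof
    assume "L x = 0"
    then have "x = 0" using lemmaA[OF Ups u ex D] by blast
    then show False using x0 by simp
  qed
  define z where "z = L y *s x - L x *s y"
  have ez: "G T u *v z = m *\<^sub>R z"
    by (simp add: z_def G_lin ex ey ofreal_smult[symmetric] vector_smult_assoc mult.commute)
  have "L z = 0" by (simp add: z_def lin)
  then have "z = 0" using lemmaA[OF Ups u ez D] by blast
  then have "L x *s y = L y *s x" by (simp add: z_def)
  then have "y = (L y / L x) *s x" using lx
    by (simp add: vec_eq_iff field_simps)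
  then show ?thesis by blast
qed

lemma no_const_form:
  fixes T :: "complex^'n^'n"
  assumes Ups: "Upsilon T" and card: "CARD('n) \<ge> 2" and u: "cmod u = 1"
    and cst: "\<forall>y. (G T u *v y) \<bullet> y = c * (norm y)^2"
  shows False
proof -
  have le: "\<forall>y. (G T u *v y) \<bullet> y \<le> c * (norm y)^2" using cst by simp
  have eig: "G T u *v y = c *\<^sub>R y" for y
  proof -
    have "(G T u *v y) \<bullet> y = c * (norm y)^2" using cst by blast
    then have "G T u *v y = complex_of_real c *s y" by (rule V2[OF G_herm le])
    then show ?thesis by (simp only: ofreal_smult)
  qed
  obtain i j :: 'n where ij: "i \<noteq> j"
  proof -
    have "\<not> (\<forall>i j::'n. i = j)"
    proof
      assume "\<forall>i j::'n. i = j"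
      then have "card (UNIV::'n set) \<le> 1" by (simp add: card_le_Suc0_iff_eq)
      then show False using card by simp
    qed
    then show ?thesis using that by blast
  qed
  have "axis i (1::complex) \<noteq> (0::complex^'n)" by (simp add: axis_eq_0_iff)
  then obtain k where "axis j (1::complex) = k *s (axis i 1 :: complex^'n)"
    using onedim[OF Ups u eig eig] by blast
  then have "(axis j (1::complex) :: complex^'n)$j = (k *s (axis i 1 :: complex^'n))$j" by simp
  then show False using ij by (simp add: axis_def)
qed

lemma W_to_quad:
  fixes T :: "complex^'n^'n"
  assumes "\<forall>w\<in>numerical_range T. Re (cnj u * w) \<le> M"
  shows "(G T u *v z) \<bullet> z \<le> M * (norm z)^2"
proof (cases "z = 0")
  case True then show ?thesis by simp
next
  case False
  define z' where "z' = (1 / norm z) *\<^sub>R z"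
  have n1: "norm z' = 1" using False by (simp add: z'_def)
  then have "cinner (T *v z') z' \<in> numerical_range T" by (auto simp: numerical_range_def)
  then have "(G T u *v z') \<bullet> z' \<le> M" using assms by (simp add: G_quad)
  moreover have "z = norm z *\<^sub>R z'" using False by (simp add: z'_def)
  then have "(G T u *v z) \<bullet> z = (norm z)^2 * ((G T u *v z') \<bullet> z')" by (metis quad_scaleR)
  ultimately show ?thesis by (metis mult.commute mult_left_mono zero_le_power2)
qed

lemma uniq_point:
  fixes T :: "complex^'n^'n"
  assumes Ups: "Upsilon T" and u: "cmod u = 1"
    and le: "\<forall>z. (G T u *v z) \<bullet> z \<le> M * (norm z)^2"
    and x: "norm x = 1" "(G T u *v x) \<bullet> x = M"
    and y: "norm y = 1" "(G T u *v y) \<bullet> y = M"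
  shows "cinner (T *v x) x = cinner (T *v y) y"
proof -
  have ex: "G T u *v x = M *\<^sub>R x" using V2[OF G_herm le, of x] x by (simp add: ofreal_smult)
  have ey: "G T u *v y = M *\<^sub>R y" using V2[OF G_herm le, of y] y by (simp add: ofreal_smult)
  have "x \<noteq> 0" using x by auto
  then obtain k where k: "y = k *s x" using onedim[OF Ups u ex ey] by blast
  then have "cmod k = 1" using x y by (simp add: norm_smult)
  then have kk: "k * cnj k = 1" by (metis complex_norm_square of_real_1 power_one)
  have "cinner (T *v y) y = k * cnj k * cinner (T *v x) x"
    by (simp add: k mv_scale cinner_scale_left cinner_scale_right mult_ac)
  then show ?thesis using kk by simp
qed



definition fdir :: "real \<Rightarrow> complex \<Rightarrow> real" where
  "fdir \<theta> w = cos \<theta> * Re w + sin \<theta> * Im w"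

lemma cont_fdir: "continuous_on UNIV (\<lambda>z::real\<times>complex. fdir (fst z) (snd z))"
  unfolding fdir_def by (intro continuous_intros)

lemma danskin:
  fixes W :: "complex set" and h :: "real \<Rightarrow> real"
  assumes cW: "compact W"
    and bound: "\<And>\<theta> w. w \<in> W \<Longrightarrow> fdir \<theta> w \<le> h \<theta>"
    and att: "\<And>\<theta>. \<exists>p\<in>W. fdir \<theta> p = h \<theta>"
    and uniq: "\<And>\<theta> p q. p \<in> W \<Longrightarrow> q \<in> W \<Longrightarrow> fdir \<theta> p = h \<theta> \<Longrightarrow> fdir \<theta> q = h \<theta> \<Longrightarrow> p = q"
  shows "h differentiable (at \<theta>0)"
proof -
  define p where "p \<theta> = (SOME p. p \<in> W \<and> fdir \<theta> p = h \<theta>)" for \<theta>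
  have p: "p \<theta> \<in> W \<and> fdir \<theta> (p \<theta>) = h \<theta>" for \<theta>
    unfolding p_def using att[of \<theta>] by (metis (mono_tags, lifting) someI_ex)
  have graph: "(\<lambda>x. (x, p x)) ` UNIV = {z. snd z \<in> W} \<inter> (\<Inter>w'\<in>W. {z. fdir (fst z) w' \<le> fdir (fst z) (snd z)})"
  proof (intro equalityI subsetI)
    fix z assume "z \<in> (\<lambda>x. (x, p x)) ` UNIV"
    then show "z \<in> {z. snd z \<in> W} \<inter> (\<Inter>w'\<in>W. {z. fdir (fst z) w' \<le> fdir (fst z) (snd z)})"
      using p bound by auto
  next
    fix z assume z: "z \<in> {z. snd z \<in> W} \<inter> (\<Inter>w'\<in>W. {z. fdir (fst z) w' \<le> fdir (fst z) (snd z)})"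
    obtain \<theta> w where zz: "z = (\<theta>, w)" by fastforce
    have "w \<in> W" using z zz by auto
    moreover have "fdir \<theta> (p \<theta>) \<le> fdir \<theta> w" using z zz p[of \<theta>] by auto
    then have "fdir \<theta> w = h \<theta>" using p bound[OF \<open>w \<in> W\<close>, of \<theta>] by auto
    ultimately have "w = p \<theta>" using uniq p by metis
    then show "z \<in> (\<lambda>x. (x, p x)) ` UNIV" using zz by auto
  qed
  have "closed ((\<lambda>x. (x, p x)) ` UNIV)"
  proof -
    have c1: "closed {z::real\<times>complex. snd z \<in> W}"
    proof -
      have "{z::real\<times>complex. snd z \<in> W} = UNIV \<times> W" by auto
      then show ?thesis using closed_Times[OF closed_UNIV compact_imp_closed[OF cW]] by simp
    qed
    have c2: "closed {z::real\<times>complex. fdir (fst z) w' \<le> fdir (fst z) (snd z)}" for w'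
      by (rule closed_Collect_le) (unfold fdir_def; intro continuous_intros)+
    show ?thesis unfolding graph using c1 c2 by (intro closed_Int closed_INT) auto
  qed
  then have contp: "continuous_on UNIV p"
    by (intro continuous_from_closed_graph[OF cW]) (use p in auto)
  define D where "D = - sin \<theta>0 * Re (p \<theta>0) + cos \<theta>0 * Im (p \<theta>0)"
  define dc where "dc \<theta> = (cos \<theta> - cos \<theta>0) / (\<theta> - \<theta>0)" for \<theta>
  define ds where "ds \<theta> = (sin \<theta> - sin \<theta>0) / (\<theta> - \<theta>0)" for \<theta>
  have dc: "(dc \<longlongrightarrow> - sin \<theta>0) (at \<theta>0)"
    using DERIV_cos[of \<theta>0] unfolding has_field_derivative_iff dc_def by simp
  have ds: "(ds \<longlongrightarrow> cos \<theta>0) (at \<theta>0)"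
    using DERIV_sin[of \<theta>0] unfolding has_field_derivative_iff ds_def by simp
  have pl: "(p \<longlongrightarrow> p \<theta>0) (at \<theta>0)"
    using contp by (simp add: continuous_on_def)
  define q1 where "q1 \<theta> = dc \<theta> * Re (p \<theta>0) + ds \<theta> * Im (p \<theta>0)" for \<theta>
  define q2 where "q2 \<theta> = dc \<theta> * Re (p \<theta>) + ds \<theta> * Im (p \<theta>)" for \<theta>
  have l1: "(q1 \<longlongrightarrow> D) (at \<theta>0)" unfolding q1_def D_def
    by (intro tendsto_intros dc ds)
  have l2: "(q2 \<longlongrightarrow> D) (at \<theta>0)" unfolding q2_def D_def
    by (intro tendsto_intros dc ds pl)
  have key: "min (q1 \<theta>) (q2 \<theta>) \<le> (h \<theta> - h \<theta>0) / (\<theta> - \<theta>0) \<and>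
             (h \<theta> - h \<theta>0) / (\<theta> - \<theta>0) \<le> max (q1 \<theta>) (q2 \<theta>)" if ne: "\<theta> \<noteq> \<theta>0" for \<theta>
  proof -
    have lo: "fdir \<theta> (p \<theta>0) - fdir \<theta>0 (p \<theta>0) \<le> h \<theta> - h \<theta>0"
      using p[of \<theta>0] bound[of "p \<theta>0" \<theta>] p by auto
    have hi: "h \<theta> - h \<theta>0 \<le> fdir \<theta> (p \<theta>) - fdir \<theta>0 (p \<theta>)"
      using p[of \<theta>] bound[of "p \<theta>" \<theta>0] p by auto
    have nz: "\<theta> - \<theta>0 \<noteq> 0" using ne by simp
    have e1: "q1 \<theta> = (fdir \<theta> (p \<theta>0) - fdir \<theta>0 (p \<theta>0)) / (\<theta> - \<theta>0)"
      unfolding q1_def dc_def ds_def fdir_def by (simp add: diff_divide_distrib add_divide_distrib algebra_simps)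
    have e2: "q2 \<theta> = (fdir \<theta> (p \<theta>) - fdir \<theta>0 (p \<theta>)) / (\<theta> - \<theta>0)"
      unfolding q2_def dc_def ds_def fdir_def by (simp add: diff_divide_distrib add_divide_distrib algebra_simps)
    show ?thesis
    proof (cases "\<theta> > \<theta>0")
      case True
      then have "q1 \<theta> \<le> (h \<theta> - h \<theta>0) / (\<theta> - \<theta>0)" "(h \<theta> - h \<theta>0) / (\<theta> - \<theta>0) \<le> q2 \<theta>"
        using lo hi e1 e2 by (simp_all add: divide_right_mono)
      then show ?thesis by linarith
    next
      case False
      then have neg: "\<theta> - \<theta>0 < 0" using ne by simp
      then have "q2 \<theta> \<le> (h \<theta> - h \<theta>0) / (\<theta> - \<theta>0)" "(h \<theta> - h \<theta>0) / (\<theta> - \<theta>0) \<le> q1 \<theta>"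
        using lo hi e1 e2 by (simp_all add: divide_right_mono_neg)
      then show ?thesis by linarith
    qed
  qed
  have "((\<lambda>\<theta>. (h \<theta> - h \<theta>0) / (\<theta> - \<theta>0)) \<longlongrightarrow> D) (at \<theta>0)"
  proof (rule tendsto_sandwich[of "\<lambda>\<theta>. min (q1 \<theta>) (q2 \<theta>)" _ _ "\<lambda>\<theta>. max (q1 \<theta>) (q2 \<theta>)"])
    show "\<forall>\<^sub>F \<theta> in at \<theta>0. min (q1 \<theta>) (q2 \<theta>) \<le> (h \<theta> - h \<theta>0) / (\<theta> - \<theta>0)"
      using key by (auto simp: eventually_at_filter)
    show "\<forall>\<^sub>F \<theta> in at \<theta>0. (h \<theta> - h \<theta>0) / (\<theta> - \<theta>0) \<le> max (q1 \<theta>) (q2 \<theta>)"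
      using key by (auto simp: eventually_at_filter)
    show "((\<lambda>\<theta>. min (q1 \<theta>) (q2 \<theta>)) \<longlongrightarrow> D) (at \<theta>0)"
      using tendsto_min[OF l1 l2] by simp
    show "((\<lambda>\<theta>. max (q1 \<theta>) (q2 \<theta>)) \<longlongrightarrow> D) (at \<theta>0)"
      using tendsto_max[OF l1 l2] by simp
  qed
  then have "(h has_field_derivative D) (at \<theta>0)" by (simp add: has_field_derivative_iff)
  then show ?thesis using real_differentiable_def by blast
qed



lemma quad_expand:
  "cinner (M *v (a *s x + b *s y)) (a *s x + b *s y) =
     a * cnj a * cinner (M *v x) x + b * cnj b * cinner (M *v y) y
     + a * cnj b * cinner (M *v x) y + b * cnj a * cinner (M *v y) x"
  by (simp add: mv_add mv_scale cinner_add_left cinner_add_right cinner_scale_left cinner_scale_right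
      algebra_simps)

lemma unit_multiple:
  fixes T :: "complex^'n^'n"
  assumes "norm x = 1" "norm y = 1" "x = c *s y"
  shows "cinner (T *v x) x = cinner (T *v y) y"
proof -
  have "cmod c = 1" using assms by (simp add: norm_smult)
  then have kk: "c * cnj c = 1" by (metis complex_norm_square of_real_1 power_one)
  have "cinner (T *v x) x = c * cnj c * cinner (T *v y) y"
    by (simp add: assms(3) mv_scale cinner_scale_left cinner_scale_right mult_ac)
  then show ?thesis using kk by simp
qed

lemma Im_cnj_add: "Im (cnj v + v) = 0" by simp

lemma seg_in_W:
  fixes T :: "complex^'n^'n"
  assumes x: "norm x = 1" and y: "norm y = 1" and s: "0 \<le> s" "s \<le> 1"
  shows "cinner (T *v x) x + of_real s * (cinner (T *v y) y - cinner (T *v x) x) \<in> numerical_range T"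
proof -
  define p where "p = cinner (T *v x) x"
  define q where "q = cinner (T *v y) y"
  show ?thesis
  proof (cases "p = q")
    case True
    then have "cinner (T *v x) x + of_real s * (cinner (T *v y) y - cinner (T *v x) x) = cinner (T *v x) x"
      by (simp add: p_def q_def)
    then show ?thesis using x unfolding numerical_range_def by blast
  next
    case False
    define d where "d = q - p"
    have d0: "d \<noteq> 0" using False by (simp add: d_def)
    define A where "A = cinner (T *v x) y - p * cinner x y"
    define B where "B = cinner (T *v y) x - p * cinner y x"
    define E where "E = A / d - cnj (B / d)"
    define \<zeta> where "\<zeta> = (if E = 0 then 1 else E / of_real (cmod E))"
    have z1: "cmod \<zeta> = 1" by (simp add: \<zeta>_def norm_divide)
    then have zz: "\<zeta> * cnj \<zeta> = 1" by (metis complex_norm_square of_real_1 power_one)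
    have zE: "Im (cnj \<zeta> * E) = 0"
    proof (cases "E = 0")
      case False
      have "cnj \<zeta> * E = E * cnj E / of_real (cmod E)" by (simp add: \<zeta>_def False)
      also have "\<dots> = of_real ((cmod E)^2 / cmod E)" by (simp add: complex_norm_square[symmetric])
      finally show ?thesis by (metis Im_complex_of_real)
    qed (simp add: \<zeta>_def)
    define K where "K = (cnj \<zeta> * A + \<zeta> * B) / d"
    have IK: "Im K = 0"
    proof -
      have "K = cnj \<zeta> * E + (cnj \<zeta> * cnj (B / d) + \<zeta> * (B / d))"
        by (simp add: K_def E_def field_simps add_divide_distrib)
      also have "Im \<dots> = Im (cnj \<zeta> * E)"
      proof -
        have "cnj \<zeta> * cnj (B / d) = cnj (\<zeta> * (B / d))" by simp
        then have "Im (cnj \<zeta> * cnj (B / d) + \<zeta> * (B / d)) = Im (cnj (\<zeta> * (B / d)) + \<zeta> * (B / d))" by simp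
        also have "\<dots> = 0" by (rule Im_cnj_add)
        finally have "Im (cnj \<zeta> * cnj (B / d) + \<zeta> * (B / d)) = 0" .
        then show ?thesis by simp
      qed
      finally show ?thesis using zE by simp
    qed
    define c0 where "c0 = Re (cnj \<zeta> * cinner x y + \<zeta> * cinner y x)"
    define a where "a t = of_real (1 - t) *s x + (of_real t * \<zeta>) *s y" for t :: real
    have xx: "cinner x x = 1" using x by (simp add: cinner_self)
    have yy: "cinner y y = 1" using y by (simp add: cinner_self)
    have Ta: "cinner (T *v a t) (a t) - p * cinner (a t) (a t) = d * of_real (t^2 + (1 - t) * t * Re K)" for t
    proof -
      have e1: "cinner (T *v a t) (a t) = of_real ((1-t)^2) * p + of_real (t^2) * q
          + of_real ((1-t) * t) * (cnj \<zeta> * cinner (T *v x) y + \<zeta> * cinner (T *v y) x)"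
        unfolding a_def quad_expand p_def q_def using zz
        by (simp add: power2_eq_square algebra_simps)
      have e2: "cinner (mat 1 *v a t) (a t) = of_real ((1-t)^2) + of_real (t^2)
          + of_real ((1-t) * t) * (cnj \<zeta> * cinner x y + \<zeta> * cinner y x)"
        unfolding a_def quad_expand using zz xx yy
        by (simp add: power2_eq_square algebra_simps)
      have "K = of_real (Re K)" using IK by (simp add: complex_eq_iff)
      then have dK: "cnj \<zeta> * A + \<zeta> * B = d * of_real (Re K)" using d0 by (simp add: K_def field_simps)
      have e2': "cinner (a t) (a t) = of_real ((1-t)^2) + of_real (t^2)
          + of_real ((1-t) * t) * (cnj \<zeta> * cinner x y + \<zeta> * cinner y x)"
        using e2 by simp
      have "cinner (T *v a t) (a t) - p * cinner (a t) (a t) = of_real (t^2) * d + of_real ((1-t) * t) * (cnj \<zeta> * A + \<zeta> * B)"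
        unfolding e1 e2' by (simp add: A_def B_def d_def algebra_simps)
      also have "\<dots> = of_real (t^2) * d + of_real ((1-t) * t) * (d * of_real (Re K))" by (simp only: dK)
      also have "\<dots> = d * of_real (t^2 + (1 - t) * t * Re K)" by (simp add: algebra_simps)
      finally show ?thesis .
    qed
    have na: "(norm (a t))^2 = (1-t)^2 + t^2 + (1 - t) * t * c0" for t
    proof -
      have "cinner (mat 1 *v a t) (a t) = of_real ((1-t)^2) + of_real (t^2)
          + of_real ((1-t) * t) * (cnj \<zeta> * cinner x y + \<zeta> * cinner y x)"
        unfolding a_def quad_expand using zz xx yy
        by (simp add: power2_eq_square algebra_simps)
      then have "Re (cinner (a t) (a t)) = (1-t)^2 + t^2 + (1 - t) * t * c0"
        by (simp add: c0_def)
      then show ?thesis by (simp add: cinner_self)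
    qed
    have anz: "a t \<noteq> 0" if "0 \<le> t" "t \<le> 1" for t
    proof
      assume a0: "a t = 0"
      show False
      proof (cases "t = 1")
        case True
        then have "\<zeta> *s y = 0" using a0 by (simp add: a_def)
        then have "norm (\<zeta> *s y) = 0" by simp
        then show False using z1 y by (simp add: norm_smult)
      next
        case False
        then have "1 - t \<noteq> 0" by simp
        have "of_real (1 - t) *s x = - ((of_real t * \<zeta>) *s y)" using a0 by (simp add: a_def eq_neg_iff_add_eq_0)
        then have "x = (- (of_real t * \<zeta>) / of_real (1 - t)) *s y" using \<open>1 - t \<noteq> 0\<close>
          by (simp add: vec_eq_iff field_simps)
        then have "p = q" unfolding p_def q_def using x y unit_multiple by blast
        then show False using \<open>p \<noteq> q\<close> by simp
      qed
    qed
    define g where "g t = (t^2 + (1 - t) * t * Re K) / ((1-t)^2 + t^2 + (1 - t) * t * c0)" for t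
    have pos: "(1-t)^2 + t^2 + (1 - t) * t * c0 \<noteq> 0" if "0 \<le> t" "t \<le> 1" for t
      using anz[OF that] na[of t] by (metis norm_eq_zero power_not_zero zero_power2)
    have cg: "continuous_on {0..1} g"
      unfolding g_def by (intro continuous_intros) (use pos in auto)
    have g0: "g 0 = 0" by (simp add: g_def)
    have g1: "g 1 = 1" by (simp add: g_def)
    obtain t where t: "0 \<le> t" "t \<le> 1" "g t = s"
      using IVT'[of g 0 s 1] cg g0 g1 s by auto
    define z where "z = (1 / norm (a t)) *\<^sub>R a t"
    have nz: "norm (a t) \<noteq> 0" using anz[OF t(1,2)] by simp
    have z1': "norm z = 1" using nz by (simp add: z_def)
    have "cinner (T *v z) z = cinner (T *v a t) (a t) / of_real ((norm (a t))^2)"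
      by (simp add: z_def mv_scaleR ofreal_smult[symmetric] mv_scale cinner_scale_left cinner_scale_right
          power2_eq_square)
    also have "\<dots> = (d * of_real (t^2 + (1 - t) * t * Re K) + p * cinner (a t) (a t)) / of_real ((norm (a t))^2)"
      using Ta[of t] by (simp add: algebra_simps)
    also have "\<dots> = p + of_real s * d"
    proof -
      have "t^2 + (1 - t) * t * Re K = s * ((1-t)^2 + t^2 + (1 - t) * t * c0)"
        using t(3) pos[OF t(1,2)] unfolding g_def by (simp add: divide_eq_eq)
      then have "t^2 + (1 - t) * t * Re K = s * (norm (a t))^2" using na[of t] by simp
      then show ?thesis using nz by (simp add: cinner_self field_simps)
    qed
    finally have "cinner (T *v z) z = p + of_real s * (q - p)" by (simp add: d_def)
    then show ?thesis using z1' unfolding numerical_range_def p_def q_def by (auto intro!: exI[of _ z])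
  qed
qed

lemma W_convex:
  fixes T :: "complex^'n^'n"
  shows "convex (numerical_range T)"
proof (rule convexI)
  fix p q :: complex and u v :: real
  assume p: "p \<in> numerical_range T" and q: "q \<in> numerical_range T" and uv: "0 \<le> u" "0 \<le> v" "u + v = 1"
  obtain x where x: "norm x = 1" "p = cinner (T *v x) x" using p by (auto simp: numerical_range_def)
  obtain y where y: "norm y = 1" "q = cinner (T *v y) y" using q by (auto simp: numerical_range_def)
  have "u = 1 - v" using uv by simp
  have "(1 - v) *\<^sub>R p + v *\<^sub>R q = p + of_real v * (q - p)"
    by (simp add: scaleR_conv_of_real algebra_simps)
  then have "u *\<^sub>R p + v *\<^sub>R q = p + of_real v * (q - p)" using \<open>u = 1 - v\<close> by simp
  moreover have "v \<le> 1" using uv by simp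
  ultimately show "u *\<^sub>R p + v *\<^sub>R q \<in> numerical_range T"
    using seg_in_W[OF x(1) y(1) uv(2)] x y by simp
qed



lemma W_compact: "compact (numerical_range (T::complex^'n^'n))"
proof -
  have e: "numerical_range T = (\<lambda>x. cinner (T *v x) x) ` sphere 0 1"
    by (auto simp: numerical_range_def)
  have "continuous_on UNIV (\<lambda>x::complex^'n. cinner (T *v x) x)"
    unfolding cinner_def matrix_vector_mult_def by (intro continuous_intros)
  then show ?thesis unfolding e
    by (intro compact_continuous_image compact_sphere) (auto intro: continuous_on_subset)
qed

lemma Gneg: "(G T (-u) *v y) \<bullet> y = - ((G T u *v y) \<bullet> y)"
  by (simp add: G_quad)

lemma eig_orth_c:
  assumes h: "herm M" and a: "M *v a = \<mu> *\<^sub>R a" and b: "M *v b = \<nu> *\<^sub>R b" and ne: "\<mu> \<noteq> \<nu>"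
  shows "cinner a b = 0"
proof -
  have "cinner (M *v a) b = cinner a (M *v b)" using h by (simp add: herm_def)
  then have "of_real \<mu> * cinner a b = of_real \<nu> * cinner a b"
    using a b by (simp add: ofreal_smult[symmetric] cinner_scale_left cinner_scale_right)
  then show ?thesis using ne by simp
qed

lemma fdir_eq: "fdir \<theta> w = Re (cnj (exp (\<i> * of_real \<theta>)) * w)"
  by (simp add: fdir_def cis_conv_exp[symmetric])

lemma cmod_exp_i: "cmod (exp (\<i> * of_real \<theta>)) = 1"
  by (simp add: cis_conv_exp[symmetric])

lemma support_facts:
  fixes T :: "complex^'n^'n"
  shows "\<exists>M. (\<forall>w\<in>numerical_range T. Re (cnj u * w) \<le> M)
    \<and> (\<exists>y. norm y = 1 \<and> Re (cnj u * cinner (T *v y) y) = M)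
    \<and> Max {\<mu>::real. is_eigenvalue (G T u) (of_real \<mu>)} = M
    \<and> (\<forall>z. (G T u *v z) \<bullet> z \<le> M * (norm z)^2)"
proof -
  obtain y0 m where y0: "norm y0 = 1" and le: "\<forall>y. (G T u *v y) \<bullet> y \<le> m * (norm y)^2"
    and ev: "G T u *v y0 = m *\<^sub>R y0" and mx: "Max {\<mu>::real. is_eigenvalue (G T u) (of_real \<mu>)} = m"
    using top_eig[OF G_herm] by blast
  have "\<forall>w\<in>numerical_range T. Re (cnj u * w) \<le> m"
  proof
    fix w assume "w \<in> numerical_range T"
    then obtain x where x: "norm x = 1" "w = cinner (T *v x) x" by (auto simp: numerical_range_def)
    then show "Re (cnj u * w) \<le> m" using le[rule_format, of x] by (simp add: G_quad)
  qed
  moreover have "Re (cnj u * cinner (T *v y0) y0) = m"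
  proof -
    have "Re (cnj u * cinner (T *v y0) y0) = (G T u *v y0) \<bullet> y0" by (simp only: G_quad)
    also have "\<dots> = m * (norm y0)^2" using ev by (simp add: power2_norm_eq_inner)
    finally show ?thesis using y0 by simp
  qed
  ultimately show ?thesis using y0 mx le by blast
qed

lemma lam_diff:
  fixes T :: "complex^'n^'n"
  assumes Ups: "Upsilon T"
  shows "lam T differentiable (at \<theta>0)"
proof (rule danskin[OF W_compact])
  have lamM: "\<exists>M. lam T \<theta> = M \<and> (\<forall>w\<in>numerical_range T. fdir \<theta> w \<le> M)
    \<and> (\<exists>y. norm y = 1 \<and> fdir \<theta> (cinner (T *v y) y) = M)
    \<and> (\<forall>z. (G T (exp (\<i> * of_real \<theta>)) *v z) \<bullet> z \<le> M * (norm z)^2)" for \<theta>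
    using support_facts[of T "exp (\<i> * of_real \<theta>)"]
    by (simp add: lam_def re_part_G fdir_eq)
  show "fdir \<theta> w \<le> lam T \<theta>" if "w \<in> numerical_range T" for \<theta> w
    using lamM[of \<theta>] that by auto
  show "\<exists>p\<in>numerical_range T. fdir \<theta> p = lam T \<theta>" for \<theta>
    using lamM[of \<theta>] by (auto simp: numerical_range_def)
  show "p = q" if pq: "p \<in> numerical_range T" "q \<in> numerical_range T" "fdir \<theta> p = lam T \<theta>"
     "fdir \<theta> q = lam T \<theta>" for \<theta> p q
  proof -
    obtain x where x: "norm x = 1" "p = cinner (T *v x) x" using pq(1) unfolding numerical_range_def by blast
    obtain y where y: "norm y = 1" "q = cinner (T *v y) y" using pq(2) unfolding numerical_range_def by blast
    obtain M where M: "lam T \<theta> = M" "\<forall>z. (G T (exp (\<i> * of_real \<theta>)) *v z) \<bullet> z \<le> M * (norm z)^2"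
      using lamM[of \<theta>] by blast
    show ?thesis
      using uniq_point[OF Ups cmod_exp_i M(2) x(1) _ y(1)] pq x y M
      by (simp add: G_quad fdir_eq)
  qed
qed



lemma top_is:
  fixes T :: "complex^'n^'n"
  assumes Ups: "Upsilon T" and u0: "cmod u0 = 1"
    and ex: "G T u0 *v x = e0 *\<^sub>R x"
    and orth: "\<And>y. cinner y x = 0 \<Longrightarrow> adjoint_mat T *v (T *v y) = y"
  shows "\<forall>z. (G T u0 *v z) \<bullet> z \<le> e0 * (norm z)^2"
proof -
  obtain y0 m where y0: "norm y0 = 1" and le: "\<forall>y. (G T u0 *v y) \<bullet> y \<le> m * (norm y)^2"
    and ev: "G T u0 *v y0 = m *\<^sub>R y0"
    using top_eig[OF G_herm] by blast
  have "m = e0"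
  proof (rule ccontr)
    assume "m \<noteq> e0"
    then have "cinner y0 x = 0" using eig_orth_c[OF G_herm ev ex] by blast
    then have "adjoint_mat T *v (T *v y0) = y0" by (rule orth)
    then have "y0 = 0" using lemmaA[OF Ups u0 ev] by blast
    then show False using y0 by simp
  qed
  then show ?thesis using le by simp
qed

lemma no_corner:
  fixes T :: "complex^'n^'n"
  assumes Ups: "Upsilon T" and card: "CARD('n) \<ge> 2"
    and p: "p \<in> numerical_range T"
    and s1: "supports (numerical_range T) p u1" and s2: "supports (numerical_range T) p u2"
    and ne: "u1 \<noteq> u2"
  shows False
proof -
  let ?W = "numerical_range T"
  let ?A = "adjoint_mat T"
  obtain x where x: "norm x = 1" "p = cinner (T *v x) x" using p unfolding numerical_range_def by blast
  have u1: "cmod u1 = 1" and u2: "cmod u2 = 1" using s1 s2 by (auto simp: supports_def)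
  define M1 where "M1 = Re (cnj u1 * p)"
  define M2 where "M2 = Re (cnj u2 * p)"
  have le1: "\<forall>z. (G T u1 *v z) \<bullet> z \<le> M1 * (norm z)^2"
    using W_to_quad s1 by (auto simp: supports_def M1_def)
  have le2: "\<forall>z. (G T u2 *v z) \<bullet> z \<le> M2 * (norm z)^2"
    using W_to_quad s2 by (auto simp: supports_def M2_def)
  have ev1: "G T u1 *v x = M1 *\<^sub>R x"
  proof -
    have "(G T u1 *v x) \<bullet> x = M1 * (norm x)^2" unfolding G_quad using x by (simp add: M1_def)
    then have "G T u1 *v x = of_real M1 *s x" by (rule V2[OF G_herm le1])
    then show ?thesis by (simp only: ofreal_smult)
  qed
  have ev2: "G T u2 *v x = M2 *\<^sub>R x"
  proof -
    have "(G T u2 *v x) \<bullet> x = M2 * (norm x)^2" unfolding G_quad using x by (simp add: M2_def)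
    then have "G T u2 *v x = of_real M2 *s x" by (rule V2[OF G_herm le2])
    then show ?thesis by (simp only: ofreal_smult)
  qed
  show False
  proof (cases "u2 = - u1")
    case True
    have "(G T u1 *v z) \<bullet> z = M1 * (norm z)^2" for z
    proof -
      have "- ((G T u1 *v z) \<bullet> z) \<le> M2 * (norm z)^2" using le2[rule_format, of z] True Gneg[of T u1 z] by simp
      moreover have "M2 = - M1" using True by (simp add: M1_def M2_def)
      ultimately have "M1 * (norm z)^2 \<le> (G T u1 *v z) \<bullet> z" by simp
      then show ?thesis using le1[rule_format, of z] by linarith
    qed
    then show False using no_const_form[OF Ups card u1] by blast
  next
    case False
    have uu1: "cnj u1 * u1 = 1" using u1 by (metis complex_norm_square mult.commute of_real_1 power_one)
    have uu2: "cnj u2 * u2 = 1" using u2 by (metis complex_norm_square mult.commute of_real_1 power_one)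
    define det where "det = u2 * cnj u1 - u1 * cnj u2"
    have det0: "det \<noteq> 0"
    proof
      assume "det = 0"
      define r where "r = u2 * cnj u1"
      have "cnj r = r" using \<open>det = 0\<close> by (simp add: r_def det_def mult.commute)
      then have "Im (cnj r) = Im r" by simp
      then have "- Im r = Im r" by (simp only: cnj.sel)
      then have "Im r = 0" by simp
      moreover have "cmod r = 1" using u1 u2 by (simp add: r_def norm_mult)
      ultimately have "\<bar>Re r\<bar> = 1" by (simp add: cmod_eq_Re)
      then have "r = 1 \<or> r = -1" using \<open>Im r = 0\<close> by (auto simp: complex_eq_iff abs_if split: if_splits)
      moreover have "r * u1 = u2" by (simp add: r_def mult.assoc uu1)
      ultimately show False using ne False by auto
    qed
    have c1: "cnj u1 * (T *v x)$i + u1 * (?A *v x)$i = 2 * of_real M1 * x$i" for i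
    proof -
      have "(G T u1 *v x)$i = (of_real M1 *s x)$i" using ev1 by (simp add: ofreal_smult)
      then show ?thesis by (simp add: G_mv field_simps)
    qed
    have c2: "cnj u2 * (T *v x)$i + u2 * (?A *v x)$i = 2 * of_real M2 * x$i" for i
    proof -
      have "(G T u2 *v x)$i = (of_real M2 *s x)$i" using ev2 by (simp add: ofreal_smult)
      then show ?thesis by (simp add: G_mv field_simps)
    qed
    define \<alpha> where "\<alpha> = 2 * (of_real M1 * u2 - of_real M2 * u1) / det"
    have Tx: "T *v x = \<alpha> *s x"
    proof -
      have "det * (T *v x)$i = 2 * (of_real M1 * u2 - of_real M2 * u1) * x$i" for i
      proof -
        have "u2 * (cnj u1 * (T *v x)$i + u1 * (?A *v x)$i) - u1 * (cnj u2 * (T *v x)$i + u2 * (?A *v x)$i)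
          = u2 * (2 * of_real M1 * x$i) - u1 * (2 * of_real M2 * x$i)" using c1 c2 by simp
        then show ?thesis by (simp add: det_def algebra_simps)
      qed
      then show ?thesis using det0 by (simp add: vec_eq_iff \<alpha>_def field_simps)
    qed
    define \<beta> where "\<beta> = cnj u1 * (2 * of_real M1 - cnj u1 * \<alpha>)"
    have Ax: "?A *v x = \<beta> *s x"
    proof -
      have "(?A *v x)$i = \<beta> * x$i" for i
      proof -
        have "u1 * (?A *v x)$i = 2 * of_real M1 * x$i - cnj u1 * \<alpha> * x$i"
          using c1[of i] Tx by (simp add: algebra_simps)
        then have "cnj u1 * u1 * (?A *v x)$i = cnj u1 * (2 * of_real M1 * x$i - cnj u1 * \<alpha> * x$i)"
          by (simp add: mult.assoc)
        then have "(?A *v x)$i = cnj u1 * (2 * of_real M1 * x$i - cnj u1 * \<alpha> * x$i)" using uu1 by simp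
        then show ?thesis by (simp add: \<beta>_def algebra_simps)
      qed
      then show ?thesis by (simp add: vec_eq_iff)
    qed
    have xx: "cinner x x = 1" using x by (simp add: cinner_self)
    have b\<alpha>: "\<beta> = cnj \<alpha>"
    proof -
      have "cinner (?A *v x) x = cinner x (T *v x)" by (simp add: cinner_adj2)
      then show ?thesis using xx by (simp add: Ax Tx cinner_scale_left cinner_scale_right)
    qed
    have contr: "\<forall>x. norm (T *v x) \<le> norm x" and noev: "\<And>c. is_eigenvalue T c \<Longrightarrow> cmod c \<noteq> 1"
      using Ups by (auto simp: Upsilon_def)
    have x0: "x \<noteq> 0" using x by auto
    have "cmod \<alpha> \<le> 1" using contr[rule_format, of x] x by (simp add: Tx norm_smult)
    moreover have "cmod \<alpha> \<noteq> 1" using noev[of \<alpha>] Tx x0 by (auto simp: is_eigenvalue_def)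
    ultimately have a1: "cmod \<alpha> < 1" by simp
    define s0 where "s0 = 1 - (cmod \<alpha>)^2"
    have s0p: "s0 > 0" using a1 by (simp add: s0_def abs_square_less_1)
    have Dx: "x - ?A *v (T *v x) = of_real s0 *s x"
    proof -
      have "?A *v (T *v x) = (\<alpha> * cnj \<alpha>) *s x" by (simp add: Tx mv_scale Ax b\<alpha> vector_smult_assoc mult.commute)
      moreover have "\<alpha> * cnj \<alpha> = of_real ((cmod \<alpha>)^2)" by (simp only: complex_norm_square)
      ultimately have "?A *v (T *v x) = of_real ((cmod \<alpha>)^2) *s x" by simp
      then show ?thesis unfolding s0_def by (simp add: vec_eq_iff algebra_simps)
    qed
    obtain r c where rc: "\<forall>z. z - ?A *v (T *v z) = (\<Sum>j\<in>UNIV. r$j * z$j) *s c"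
      using ell_exists[OF Ups] by blast
    define L where "L z = (\<Sum>j\<in>UNIV. r$j * z$j)" for z :: "complex^'n"
    have Lx: "L x *s c = of_real s0 *s x" using rc Dx by (simp add: L_def)
    have Lx0: "L x \<noteq> 0"
    proof
      assume "L x = 0"
      then have "of_real s0 *s x = 0" using Lx by simp
      then have "norm (of_real s0 *s x) = 0" by simp
      then show False using s0p x0 by (simp add: norm_smult)
    qed
    have cx: "c = (of_real s0 / L x) *s x"
    proof -
      have "c = (1 / L x) *s (L x *s c)" using Lx0 by (simp add: vector_smult_assoc)
      also have "\<dots> = (of_real s0 / L x) *s x" by (simp add: Lx vector_smult_assoc)
      finally show ?thesis .
    qed
    have orth: "?A *v (T *v y) = y" if y: "cinner y x = 0" for y
    proof -
      have "cinner (?A *v (T *v y)) x = cinner (T *v y) (T *v x)" by (simp add: cinner_adj)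
      also have "\<dots> = cnj \<alpha> * cinner (T *v y) x" by (simp add: Tx cinner_scale_right)
      also have "\<dots> = cnj \<alpha> * cinner y (?A *v x)" by (simp add: cinner_adj)
      also have "\<dots> = 0" by (simp add: Ax cinner_scale_right y)
      finally have "cinner (y - ?A *v (T *v y)) x = 0" by (simp add: cinner_diff_left y)
      then have "cinner (L y *s c) x = 0" using rc by (simp add: L_def)
      then have "L y * (of_real s0 / L x) = 0" by (simp add: cx cinner_scale_left xx)
      then have "L y = 0" using s0p Lx0 by simp
      then show ?thesis using rc[rule_format, of y] by (simp add: L_def)
    qed
    have ra: "\<alpha> + cnj \<alpha> = 2 * of_real (Re \<alpha>)" by (simp add: complex_add_cnj)
    have G1: "G T 1 *v x = Re \<alpha> *\<^sub>R x"
    proof -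
      have "(G T 1 *v x)$i = (of_real (Re \<alpha>) *s x)$i" for i
      proof -
        have "(G T 1 *v x)$i = (\<alpha> + cnj \<alpha>) * x$i / 2" by (simp add: G_mv Tx Ax b\<alpha> field_simps)
        then show ?thesis using ra by simp
      qed
      then show ?thesis by (simp add: vec_eq_iff ofreal_smult[symmetric] del: vector_smult_component)
    qed
    have Gm1: "G T (-1) *v x = (- Re \<alpha>) *\<^sub>R x"
    proof -
      have "(G T (-1) *v x)$i = (of_real (- Re \<alpha>) *s x)$i" for i
      proof -
        have "(G T (-1) *v x)$i = - (\<alpha> + cnj \<alpha>) * x$i / 2" by (simp add: G_mv Tx Ax b\<alpha> field_simps)
        then show ?thesis using ra by simp
      qed
      then show ?thesis by (simp add: vec_eq_iff ofreal_smult[symmetric] del: vector_smult_component)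
    qed
    have t1: "\<forall>z. (G T 1 *v z) \<bullet> z \<le> Re \<alpha> * (norm z)^2"
      by (rule top_is[OF Ups _ G1 orth]) simp
    have t2: "\<forall>z. (G T (-1) *v z) \<bullet> z \<le> (- Re \<alpha>) * (norm z)^2"
      by (rule top_is[OF Ups _ Gm1 orth]) simp
    have "(G T 1 *v z) \<bullet> z = Re \<alpha> * (norm z)^2" for z
      using t1[rule_format, of z] t2[rule_format, of z] Gneg[of T 1 z] by simp
    then show False using no_const_form[OF Ups card, of 1 "Re \<alpha>"] by simp
  qed
qed



lemma support_at_frontier:
  fixes W :: "complex set"
  assumes cv: "convex W" and cl: "closed W" and c: "c \<in> frontier W"
  obtains v where "v \<noteq> 0" "\<forall>w\<in>W. v \<bullet> w \<le> v \<bullet> c"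
proof (cases "interior W = {}")
  case True
  then obtain a b where ab: "a \<noteq> 0" "W \<subseteq> {x. a \<bullet> x = b}"
    using empty_interior_subset_hyperplane[OF cv] by metis
  have "c \<in> W" using c cl frontier_subset_closed by blast
  then have "\<forall>w\<in>W. a \<bullet> w \<le> a \<bullet> c" using ab(2) by (metis (mono_tags) mem_Collect_eq order_refl subsetD)
  then show ?thesis using that ab(1) by blast
next
  case False
  have "{c} \<inter> interior W = {}" using c by (auto simp: frontier_def)
  then obtain a b where ab: "a \<noteq> 0" "\<forall>x\<in>{c}. a \<bullet> x \<le> b" "\<forall>x\<in>interior W. a \<bullet> x \<ge> b"
    using separating_hyperplane_sets[of "{c}" "interior W"] False cv by auto
  have "W \<subseteq> closure (interior W)"
    using convex_closure_interior[OF cv False] closure_subset by blast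
  moreover have "closure (interior W) \<subseteq> {x. b \<le> a \<bullet> x}"
    using ab(3) by (intro closure_minimal) (auto intro: closed_halfspace_ge)
  ultimately have "\<forall>w\<in>W. (-a) \<bullet> w \<le> (-a) \<bullet> c" using ab(2) by force
  then show ?thesis using that ab(1) by (metis neg_equal_0_iff_equal)
qed

lemma inner_complex_Re: "v \<bullet> w = Re (cnj v * w)"
  by (simp add: inner_complex_def)

lemma no_segment:
  fixes T :: "complex^'n^'n"
  assumes Ups: "Upsilon T" and ab: "a \<noteq> b" "closed_segment a b \<subseteq> frontier (numerical_range T)"
  shows False
proof -
  let ?W = "numerical_range T"
  have cl: "closed ?W" using W_compact compact_imp_closed by blast
  have fW: "frontier ?W \<subseteq> ?W" using cl frontier_subset_closed by blast
  define c where "c = midpoint a b"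
  have "c \<in> frontier ?W" using ab(2) midpoint_in_closed_segment unfolding c_def by blast
  then obtain v where v: "v \<noteq> 0" "\<forall>w\<in>?W. v \<bullet> w \<le> v \<bullet> c"
    using support_at_frontier[OF W_convex cl] by blast
  have aW: "a \<in> ?W" and bW: "b \<in> ?W" using ab(2) fW by auto
  have "v \<bullet> a + v \<bullet> b = 2 * (v \<bullet> c)"
    by (simp add: c_def midpoint_def inner_add_right inner_scaleR_right)
  moreover have "v \<bullet> a \<le> v \<bullet> c" "v \<bullet> b \<le> v \<bullet> c" using v(2) aW bW by auto
  ultimately have va: "v \<bullet> a = v \<bullet> c" and vb: "v \<bullet> b = v \<bullet> c" by linarith+
  define u where "u = v / of_real (cmod v)"
  have u1: "cmod u = 1" using v by (simp add: u_def norm_divide)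
  define M where "M = (v \<bullet> c) / cmod v"
  have Re_u: "Re (cnj u * w) = (v \<bullet> w) / cmod v" for w
    by (simp add: u_def inner_complex_Re)
  have bound: "\<forall>w\<in>?W. Re (cnj u * w) \<le> M"
  proof
    fix w assume w: "w \<in> ?W"
    have "Re (cnj u * w) = (v \<bullet> w) / cmod v" by (rule Re_u)
    also have "\<dots> \<le> M" unfolding M_def using v(2) w by (simp add: divide_right_mono)
    finally show "Re (cnj u * w) \<le> M" .
  qed
  have le: "\<forall>z. (G T u *v z) \<bullet> z \<le> M * (norm z)^2" using W_to_quad[OF bound] by blast
  obtain x where x: "norm x = 1" "a = cinner (T *v x) x" using aW unfolding numerical_range_def by blast
  obtain y where y: "norm y = 1" "b = cinner (T *v y) y" using bW unfolding numerical_range_def by blast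
  have "(G T u *v x) \<bullet> x = M" unfolding G_quad Re_u M_def using x va by simp
  moreover have "(G T u *v y) \<bullet> y = M" unfolding G_quad Re_u M_def using y vb by simp
  ultimately have "a = b" using uniq_point[OF Ups u1 le x(1) _ y(1)] x y by simp
  then show False using ab(1) by simp
qed

theorem mainTheorem4:
  fixes T :: "complex^'n^'n"
  assumes "CARD('n) \<ge> 2"
    and "Upsilon T"
  shows "regular_boundary (numerical_range T)
    \<and> (\<forall>\<theta>\<in>{0..<2*pi}. lam T differentiable (at \<theta>))"
proof
  have cl: "closed (numerical_range T)" using W_compact compact_imp_closed by blast
  have "\<not> corner_point (numerical_range T) p" for p
  proof
    assume "corner_point (numerical_range T) p"
    then obtain u1 u2 where "p \<in> frontier (numerical_range T)" "u1 \<noteq> u2"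
      "supports (numerical_range T) p u1" "supports (numerical_range T) p u2"
      by (auto simp: corner_point_def)
    moreover have "p \<in> numerical_range T" using calculation(1) cl frontier_subset_closed by blast
    ultimately show False using no_corner[OF assms(2,1)] by blast
  qed
  moreover have "\<not> (\<exists>a b. a \<noteq> b \<and> closed_segment a b \<subseteq> frontier (numerical_range T))"
    using no_segment[OF assms(2)] by blast
  ultimately show "regular_boundary (numerical_range T)" by (simp add: regular_boundary_def)
  show "\<forall>\<theta>\<in>{0..<2*pi}. lam T differentiable (at \<theta>)"
    using lam_diff[OF assms(2)] by blast
qed

end
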